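(* Consider the multiobjective optimal control setting, Assumption A and Algorithm 1 described in the context, and let $x_0\in\mathbb{X}_N$. Then every closed-loop trajectory $x(\cdot)=x_\mu(\cdot,x_0)$ driven by the feedback $\mu^N$ from Algorithm 1 converges to the equilibrium $x^e$, and $\widetilde{\ell}_1(x(k),\mu^N(k,x(k)))\to0$ as $k\to\infty$.
   Context: Let $f:\mathbb{R}^n\times\mathbb{R}^m\to\mathbb{R}^n$ be continuous and consider $x(k+1)=f(x(k),u(k))$, $x(0)=x_0$; $x_{\mathbf{u}}(k,x_0)$ denotes the solution for control sequence $\mathbf u$. Let $\mathbb{X}\subseteq\mathbb{R}^n$, $\mathbb{U}\subseteq\mathbb{R}^m$, $\mathbb{X}_0\subseteq\mathbb{X}$ be nonempty; horizons $N\ge2$, objectives $s\ge2$. $\mathbb{U}^N(x_0)$ is the set of $\mathbf{u}\in\mathbb{U}^N$ with $x_{\mathbf{u}}(k,x_0)\in\mathbb{X}$ for $k=1,\dots,N-1$ and $x_{\mathbf{u}}(N,x_0)\in\mathbb{X}_0$; $\mathbb{X}_N=\{x_0\in\mathbb{X}:\mathbb{U}^N(x_0)\neq\emptyset\}$. With stage costs $\ell_i:\mathbb{X}\times\mathbb{U}\to\mathbb{R}$ ($i=1,\dots,s$) and continuous $F_1:\mathbb{X}_0\to\mathbb{R}_{\ge0}$: $J_1^N(x_0,\mathbf{u})=\sum_{k=0}^{N-1}\ell_1(x_{\mathbf{u}}(k,x_0),u(k))+F_1(x_{\mathbf{u}}(N,x_0))$, $J_i^N(x_0,\mathbf{u})=\sum_{k=0}^{N-1}\ell_i(x_{\mathbf{u}}(k,x_0),u(k))$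 for $i\ge2$. $\mathbf{u}^\star\in\mathbb{U}^N(x_0)$ is efficient if no $\mathbf{u}\in\mathbb{U}^N(x_0)$ satisfies $J_i^N(x_0,\mathbf{u})\le J_i^N(x_0,\mathbf{u}^\star)$ for all $i$ with strict inequality for some $i$; $\mathbb{U}^N_{\mathcal P}(x_0)$ denotes the efficient set. $\mathcal{J}^N(x_0)$ is the set of vectors $(J_i^N(x_0,\mathbf u))_{i=1}^s$, $\mathbf u\in\mathbb{U}^N(x_0)$, and $\mathcal{J}^N_{\mathcal P}(x_0)$ the subset for efficient $\mathbf u$; external stability means every $y\in\mathcal{J}^N(x_0)$ dominates componentwise some $y_{\mathcal P}\in\mathcal{J}^N_{\mathcal P}(x_0)$. $\mathcal K_\infty$: continuous strictly increasing unbounded functions $\mathbb{R}_{\ge0}\to\mathbb{R}_{\ge0}$ vanishing at $0$. Assumption A: (i) $(x^e,u^e)\in\mathbb{X}\times\mathbb{U}$ with $f(x^e,u^e)=x^e$; (ii) $\lambda_1:\mathbb{X}\to\mathbb{R}$ bounded below, $\lambda_1(x^e)=0$, $\alpha_{\ell,1}\in\mathcal K_\infty$ with $\ell_1(x,u)-\ell_1(x^e,u^e)+\lambda_1(x)-\lambda_1(f(x,u))\ge\alpha_{\ell,1}(\|x-x^e\|+\|u-u^e\|)$ on $\mathbb{X}\times\mathbb{U}$; (iii) all $\ell_i$ continuous; (iv) $x^e\in\mathbb{X}_0$ and $\kappa:\mathbb{X}_0\to\mathbb{U}$ with $f(x,\kappa(x))\in\mathbb{X}_0$ and $F_1(f(x,\kappa(x)))+\ell_1(x,\kappa(x))\le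 F_1(x)+\ell_1(x^e,u^e)$ for all $x\in\mathbb{X}_0$; (v) $\mathcal{J}^N_{\mathcal P}(x)$ externally stable for $\mathcal{J}^N(x)$ for all $x\in\mathbb{X}_N$. Algorithm 1 ($k\in\mathbb N_0$): $x(0)=x_0$, choose any $\mathbf{u}^\star_{x(0)}\in\mathbb{U}^N_{\mathcal P}(x(0))$; for $k\ge1$ choose $\mathbf{u}^\star_{x(k)}\in\mathbb{U}^N_{\mathcal P}(x(k))$ with $J_1^N(x(k),\mathbf{u}^\star_{x(k)})\le J_1^N(x(k),\mathbf{u}_{x(k)})$, where $\mathbf{u}_{x(k+1)}:=(u^\star_{x(k)}(1),\dots,u^\star_{x(k)}(N-1),\kappa(x_{\mathbf{u}^\star_{x(k)}}(N,x(k))))$. Feedback $\mu^N(k,x(k)):=u^\star_{x(k)}(0)$, $x(k+1)=f(x(k),\mu^N(k,x(k)))$, $x_\mu(k,x_0):=x(k)$. Rotated stage cost: $\widetilde\ell_1(x,u)=\ell_1(x,u)-\ell_1(x^e,u^e)+\lambda_1(x)-\lambda_1(f(x,u))$. *)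

theory Defs
  imports "HOL-Analysis.Analysis"
begin

text \<open>Control sequences of horizon N are lists of length N.
  traj f x0 us k is the solution x_u(k,x0).\<close>

primrec traj :: "('x \<Rightarrow> 'u \<Rightarrow> 'x) \<Rightarrow> 'x \<Rightarrow> 'u list \<Rightarrow> nat \<Rightarrow> 'x" where
  "traj f x0 us 0 = x0"
| "traj f x0 us (Suc k) = f (traj f x0 us k) (us ! k)"

definition admissible ::
  "('x \<Rightarrow> 'u \<Rightarrow> 'x) \<Rightarrow> 'x set \<Rightarrow> 'u set \<Rightarrow> 'x set \<Rightarrow> nat \<Rightarrow> 'x \<Rightarrow> 'u list set" where
  "admissible f X U X0 N x0 =
     {us. length us = N \<and> set us \<subseteq> U
        \<and> (\<forall>k\<in>{1..N-1}. traj f x0 us k \<in> X) \<and> traj f x0 us N \<in> X0}"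

definition feasible_set ::
  "('x \<Rightarrow> 'u \<Rightarrow> 'x) \<Rightarrow> 'x set \<Rightarrow> 'u set \<Rightarrow> 'x set \<Rightarrow> nat \<Rightarrow> 'x set" where
  "feasible_set f X U X0 N = {x0 \<in> X. admissible f X U X0 N x0 \<noteq> {}}"

text \<open>Objective J_i^N; objectives indexed by i \<in> {1..s}, the first one carries the
  terminal cost F1.\<close>
definition Jcost ::
  "('x \<Rightarrow> 'u \<Rightarrow> 'x) \<Rightarrow> (nat \<Rightarrow> 'x \<Rightarrow> 'u \<Rightarrow> real) \<Rightarrow> ('x \<Rightarrow> real) \<Rightarrow> nat
     \<Rightarrow> nat \<Rightarrow> 'x \<Rightarrow> 'u list \<Rightarrow> real" where
  "Jcost f l F1 N i x0 us =
     (\<Sum>k<N. l i (traj f x0 us k) (us ! k)) + (if i = 1 then F1 (traj f x0 us N) else 0)"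

definition efficient_set ::
  "('x \<Rightarrow> 'u \<Rightarrow> 'x) \<Rightarrow> 'x set \<Rightarrow> 'u set \<Rightarrow> 'x set \<Rightarrow> (nat \<Rightarrow> 'x \<Rightarrow> 'u \<Rightarrow> real)
     \<Rightarrow> ('x \<Rightarrow> real) \<Rightarrow> nat \<Rightarrow> nat \<Rightarrow> 'x \<Rightarrow> 'u list set" where
  "efficient_set f X U X0 l F1 s N x0 =
     {us \<in> admissible f X U X0 N x0.
        \<not> (\<exists>v \<in> admissible f X U X0 N x0.
              (\<forall>i\<in>{1..s}. Jcost f l F1 N i x0 v \<le> Jcost f l F1 N i x0 us)
            \<and> (\<exists>i\<in>{1..s}. Jcost f l F1 N i x0 v < Jcost f l F1 N i x0 us))}"

text \<open>Objective-value vectors (as functions of the index i; only i \<in> {1..s} matters).\<close>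
definition cost_vectors ::
  "('x \<Rightarrow> 'u \<Rightarrow> 'x) \<Rightarrow> (nat \<Rightarrow> 'x \<Rightarrow> 'u \<Rightarrow> real) \<Rightarrow> ('x \<Rightarrow> real) \<Rightarrow> nat
     \<Rightarrow> 'x \<Rightarrow> 'u list set \<Rightarrow> (nat \<Rightarrow> real) set" where
  "cost_vectors f l F1 N x0 A = (\<lambda>us. \<lambda>i. Jcost f l F1 N i x0 us) ` A"

definition externally_stable ::
  "('x \<Rightarrow> 'u \<Rightarrow> 'x) \<Rightarrow> 'x set \<Rightarrow> 'u set \<Rightarrow> 'x set \<Rightarrow> (nat \<Rightarrow> 'x \<Rightarrow> 'u \<Rightarrow> real)
     \<Rightarrow> ('x \<Rightarrow> real) \<Rightarrow> nat \<Rightarrow> nat \<Rightarrow> 'x \<Rightarrow> bool" where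
  "externally_stable f X U X0 l F1 s N x0 =
     (\<forall>y \<in> cost_vectors f l F1 N x0 (admissible f X U X0 N x0).
        \<exists>yP \<in> cost_vectors f l F1 N x0 (efficient_set f X U X0 l F1 s N x0).
          \<forall>i\<in>{1..s}. yP i \<le> y i)"

definition K_inf :: "(real \<Rightarrow> real) \<Rightarrow> bool" where
  "K_inf \<alpha> = (continuous_on {0..} \<alpha> \<and> strict_mono_on {0..} \<alpha> \<and> \<alpha> 0 = 0
               \<and> (\<forall>x\<ge>0. \<alpha> x \<ge> 0) \<and> (\<forall>M. \<exists>r\<ge>0. \<alpha> r > M))"

definition shifted_seq ::
  "('x \<Rightarrow> 'u \<Rightarrow> 'x) \<Rightarrow> ('x \<Rightarrow> 'u) \<Rightarrow> nat \<Rightarrow> 'x \<Rightarrow> 'u list \<Rightarrow> 'u list" where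
  "shifted_seq f \<kappa> N x us = tl us @ [\<kappa> (traj f x us N)]"

definition rotated_cost ::
  "('x \<Rightarrow> 'u \<Rightarrow> 'x) \<Rightarrow> ('x \<Rightarrow> 'u \<Rightarrow> real) \<Rightarrow> ('x \<Rightarrow> real) \<Rightarrow> 'x \<Rightarrow> 'u \<Rightarrow> 'x \<Rightarrow> 'u \<Rightarrow> real" where
  "rotated_cost f l1 lam1 xe ue x u = l1 x u - l1 xe ue + lam1 x - lam1 (f x u)"

end

theory Submission
  imports Defs
begin

lemma traj_shift:
  assumes "us \<noteq> []" "j < length us"
  shows "traj f (f x0 (us!0)) (tl us @ w) j = traj f x0 us (Suc j)"
  using assms(2)
proof (induction j)
  case 0
  then show ?case by simp
next
  case (Suc j)
  then have "j < length (tl us)" by simp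
  then have "(tl us @ w) ! j = us ! Suc j" by (simp add: nth_append nth_tl)
  with Suc show ?case by simp
qed

lemma shift_cost:
  assumes len: "length us = N" and N1: "N \<ge> 1"
    and kap: "F1 (f z (\<kappa> z)) + l 1 z (\<kappa> z) \<le> F1 z + c"
    and z: "z = traj f x0 us N"
  shows "Jcost f l F1 N 1 (f x0 (us!0)) (shifted_seq f \<kappa> N x0 us)
         \<le> Jcost f l F1 N 1 x0 us - l 1 x0 (us!0) + c"
proof -
  obtain M where M: "N = Suc M" using N1 by (cases N) auto
  have ne: "us \<noteq> []" using len M by auto
  let ?sh = "tl us @ [\<kappa> z]"
  have sh: "shifted_seq f \<kappa> N x0 us = ?sh" unfolding shifted_seq_def z ..
  have T: "\<And>j. j < N \<Longrightarrow> traj f (f x0 (us!0)) ?sh j = traj f x0 us (Suc j)"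
    by (rule traj_shift[OF ne]) (simp add: len)
  have TM: "traj f (f x0 (us!0)) ?sh M = z" using T[of M] M z by simp
  have shM: "?sh ! M = \<kappa> z" using len M by (simp add: nth_append)
  have shj: "\<And>j. j < M \<Longrightarrow> ?sh ! j = us ! Suc j" using len M by (simp add: nth_append nth_tl)
  have TN: "traj f (f x0 (us!0)) ?sh N = f z (\<kappa> z)" using TM shM M by simp
  have s1: "(\<Sum>k<N. l 1 (traj f (f x0 (us!0)) ?sh k) (?sh ! k))
      = (\<Sum>k<M. l 1 (traj f x0 us (Suc k)) (us ! Suc k)) + l 1 z (\<kappa> z)"
    using M TM shM T shj by (simp add: M)
  have s2: "(\<Sum>k<N. l 1 (traj f x0 us k) (us ! k))
      = l 1 x0 (us!0) + (\<Sum>k<M. l 1 (traj f x0 us (Suc k)) (us ! Suc k))"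
    unfolding M by (subst sum.lessThan_Suc_shift) simp
  show ?thesis unfolding sh Jcost_def using s1 s2 TN kap z by simp
qed

lemma rot_sum:
  assumes "length us = N"
  shows "(\<Sum>k<N. l1 (traj f x0 us k) (us ! k))
    = (\<Sum>k<N. rotated_cost f l1 lam1 xe ue (traj f x0 us k) (us ! k))
      + real N * l1 xe ue - lam1 x0 + lam1 (traj f x0 us N)"
proof -
  have "(\<Sum>k<N. rotated_cost f l1 lam1 xe ue (traj f x0 us k) (us ! k))
     = (\<Sum>k<N. l1 (traj f x0 us k) (us ! k) - l1 xe ue
       - (lam1 (traj f x0 us (Suc k)) - lam1 (traj f x0 us k)))"
    unfolding rotated_cost_def by (intro sum.cong) auto
  also have "\<dots> = (\<Sum>k<N. l1 (traj f x0 us k) (us ! k)) - (\<Sum>k<N. l1 xe ue)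
       - (\<Sum>k<N. lam1 (traj f x0 us (Suc k)) - lam1 (traj f x0 us k))"
    by (simp only: sum_subtractf)
  finally have e: "(\<Sum>k<N. rotated_cost f l1 lam1 xe ue (traj f x0 us k) (us ! k))
     = (\<Sum>k<N. l1 (traj f x0 us k) (us ! k)) - (\<Sum>k<N. l1 xe ue)
       - (\<Sum>k<N. lam1 (traj f x0 us (Suc k)) - lam1 (traj f x0 us k))" .
  have tel: "(\<Sum>k<N. lam1 (traj f x0 us (Suc k)) - lam1 (traj f x0 us k))
      = lam1 (traj f x0 us N) - lam1 x0"
    by (subst sum_lessThan_telescope) simp
  have cst: "(\<Sum>k<N. l1 xe ue) = real N * l1 xe ue" by simp
  show ?thesis using e tel cst by linarith
qed

theorem corollary4p3:
  fixes f :: "real ^ 'n \<Rightarrow> real ^ 'm \<Rightarrow> real ^ 'n"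
    and X X0 :: "(real ^ 'n) set" and U :: "(real ^ 'm) set"
    and N s :: nat
    and l :: "nat \<Rightarrow> real ^ 'n \<Rightarrow> real ^ 'm \<Rightarrow> real"
    and F1 :: "real ^ 'n \<Rightarrow> real"
    and xe :: "real ^ 'n" and ue :: "real ^ 'm"
    and lam1 :: "real ^ 'n \<Rightarrow> real" and \<alpha> :: "real \<Rightarrow> real"
    and \<kappa> :: "real ^ 'n \<Rightarrow> real ^ 'm"
    and x0 :: "real ^ 'n"
    and x :: "nat \<Rightarrow> real ^ 'n" and ustar :: "nat \<Rightarrow> (real ^ 'm) list"
  assumes f_cont: "continuous_on UNIV (\<lambda>(z, v). f z v)"
    and X_ne: "X \<noteq> {}" and U_ne: "U \<noteq> {}" and X0_ne: "X0 \<noteq> {}" and X0_sub: "X0 \<subseteq> X"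
    and N_ge: "N \<ge> 2" and s_ge: "s \<ge> 2"
    and F1_cont: "continuous_on X0 F1" and F1_nonneg: "\<forall>z\<in>X0. F1 z \<ge> 0"
    \<comment> \<open>Assumption A (i)\<close>
    and A1: "xe \<in> X" "ue \<in> U" "f xe ue = xe"
    \<comment> \<open>Assumption A (ii)\<close>
    and A2_bdd: "\<exists>c. \<forall>z\<in>X. c \<le> lam1 z" and A2_zero: "lam1 xe = 0"
    and A2_K: "K_inf \<alpha>"
    and A2_diss: "\<forall>z\<in>X. \<forall>v\<in>U.
        l 1 z v - l 1 xe ue + lam1 z - lam1 (f z v) \<ge> \<alpha> (norm (z - xe) + norm (v - ue))"
    \<comment> \<open>Assumption A (iii)\<close>
    and A3: "\<forall>i\<in>{1..s}. continuous_on (X \<times> U) (\<lambda>(z, v). l i z v)"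
    \<comment> \<open>Assumption A (iv)\<close>
    and A4_xe: "xe \<in> X0"
    and A4: "\<forall>z\<in>X0. \<kappa> z \<in> U \<and> f z (\<kappa> z) \<in> X0
               \<and> F1 (f z (\<kappa> z)) + l 1 z (\<kappa> z) \<le> F1 z + l 1 xe ue"
    \<comment> \<open>Assumption A (v)\<close>
    and A5: "\<forall>z\<in>feasible_set f X U X0 N. externally_stable f X U X0 l F1 s N z"
    \<comment> \<open>initial state\<close>
    and x0_feas: "x0 \<in> feasible_set f X U X0 N"
    \<comment> \<open>Algorithm 1\<close>
    and alg_init: "x 0 = x0"
    and alg_eff: "\<forall>k. ustar k \<in> efficient_set f X U X0 l F1 s N (x k)"
    and alg_sel: "\<forall>k\<ge>1. Jcost f l F1 N 1 (x k) (ustar k)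
                        \<le> Jcost f l F1 N 1 (x k) (shifted_seq f \<kappa> N (x (k - 1)) (ustar (k - 1)))"
    and alg_step: "\<forall>k. x (Suc k) = f (x k) (ustar k ! 0)"
  shows "x \<longlonglongrightarrow> xe
    \<and> (\<lambda>k. rotated_cost f (l 1) lam1 xe ue (x k) (ustar k ! 0)) \<longlonglongrightarrow> 0"
proof -
  obtain c where c: "\<forall>z\<in>X. c \<le> lam1 z" using A2_bdd by blast
  have Kmono: "\<And>a b. 0 \<le> a \<Longrightarrow> a \<le> b \<Longrightarrow> \<alpha> a \<le> \<alpha> b"
  proof -
    fix a b :: real assume "0 \<le> a" "a \<le> b"
    then show "\<alpha> a \<le> \<alpha> b" using A2_K strict_mono_on_leD[of "{0..}" \<alpha> a b] unfolding K_inf_def by simp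
  qed
  have Kpos: "\<And>a. 0 \<le> a \<Longrightarrow> 0 \<le> \<alpha> a" using A2_K unfolding K_inf_def by blast
  have Kstrict: "\<And>a. 0 < a \<Longrightarrow> 0 < \<alpha> a"
  proof -
    fix a :: real assume "0 < a"
    then show "0 < \<alpha> a" using A2_K strict_mono_onD[of "{0..}" \<alpha> 0 a] unfolding K_inf_def by simp
  qed
  have rot_ge: "\<And>z v. z \<in> X \<Longrightarrow> v \<in> U \<Longrightarrow>
      \<alpha> (norm (z - xe) + norm (v - ue)) \<le> rotated_cost f (l 1) lam1 xe ue z v"
    using A2_diss unfolding rotated_cost_def by blast
  have rot_nn: "\<And>z v. z \<in> X \<Longrightarrow> v \<in> U \<Longrightarrow> 0 \<le> rotated_cost f (l 1) lam1 xe ue z v"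
    using rot_ge Kpos by (meson add_nonneg_nonneg norm_ge_zero order_trans)
  have adm: "\<And>k. ustar k \<in> admissible f X U X0 N (x k)"
    using alg_eff unfolding efficient_set_def by blast
  have len: "\<And>k. length (ustar k) = N" using adm unfolding admissible_def by blast
  have uU: "\<And>k j. j < N \<Longrightarrow> ustar k ! j \<in> U"
  proof -
    fix k j assume "j < N"
    then have "ustar k ! j \<in> set (ustar k)" using len[of k] by simp
    then show "ustar k ! j \<in> U" using adm[of k] unfolding admissible_def by blast
  qed
  have TX: "\<And>k j. j \<in> {1..N-1} \<Longrightarrow> traj f (x k) (ustar k) j \<in> X"
    using adm unfolding admissible_def by blast
  have TN: "\<And>k. traj f (x k) (ustar k) N \<in> X0"
    using adm unfolding admissible_def by blast
  have xsuc: "\<And>k. x (Suc k) = traj f (x k) (ustar k) 1" using alg_step by simp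
  have xX: "\<And>k. x k \<in> X"
  proof -
    fix k show "x k \<in> X"
    proof (cases k)
      case 0 then show ?thesis using x0_feas alg_init unfolding feasible_set_def by simp
    next
      case (Suc j) then show ?thesis using xsuc TX[of 1 j] N_ge by simp
    qed
  qed
  have TallX: "\<And>k j. j < N \<Longrightarrow> traj f (x k) (ustar k) j \<in> X"
  proof -
    fix k j assume "j < N"
    then show "traj f (x k) (ustar k) j \<in> X"
      using xX TX[of j k] by (cases j) auto
  qed
  define r where "r k = rotated_cost f (l 1) lam1 xe ue (x k) (ustar k ! 0)" for k
  define V where "V k = Jcost f l F1 N 1 (x k) (ustar k) + lam1 (x k)" for k
  have r_nn: "\<And>k. 0 \<le> r k" unfolding r_def using rot_nn xX uU N_ge by simp
  have Vlow: "\<And>k. real N * l 1 xe ue + c \<le> V k"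
  proof -
    fix k
    let ?T = "traj f (x k) (ustar k)"
    have e: "V k = (\<Sum>j<N. rotated_cost f (l 1) lam1 xe ue (?T j) (ustar k ! j))
      + real N * l 1 xe ue + lam1 (?T N) + F1 (?T N)"
      unfolding V_def Jcost_def using rot_sum[OF len[of k], of "l 1" f "x k" lam1 xe ue] by simp
    have "0 \<le> (\<Sum>j<N. rotated_cost f (l 1) lam1 xe ue (?T j) (ustar k ! j))"
      by (rule sum_nonneg, rule rot_nn[OF TallX uU]) auto
    moreover have "c \<le> lam1 (?T N)" using c TN X0_sub by blast
    moreover have "0 \<le> F1 (?T N)" using F1_nonneg TN by blast
    ultimately show "real N * l 1 xe ue + c \<le> V k" unfolding e by linarith
  qed
  have Vdec: "\<And>k. V (Suc k) \<le> V k - r k"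
  proof -
    fix k
    let ?z = "traj f (x k) (ustar k) N"
    have "Jcost f l F1 N 1 (x (Suc k)) (ustar (Suc k))
        \<le> Jcost f l F1 N 1 (x (Suc k)) (shifted_seq f \<kappa> N (x k) (ustar k))"
      using alg_sel[rule_format, of "Suc k"] by simp
    also have "\<dots> \<le> Jcost f l F1 N 1 (x k) (ustar k) - l 1 (x k) (ustar k ! 0) + l 1 xe ue"
      unfolding alg_step[rule_format]
      by (rule shift_cost[OF len _ _ refl]) (use N_ge A4 TN in auto)
    finally show "V (Suc k) \<le> V k - r k"
      unfolding V_def r_def rotated_cost_def using alg_step by simp
  qed
  have sumle: "\<And>K. (\<Sum>k<K. r k) \<le> V 0 - V K"
  proof -
    fix K show "(\<Sum>k<K. r k) \<le> V 0 - V K"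
    proof (induction K)
      case 0 then show ?case by simp
    next
      case (Suc K) then show ?case using Vdec[of K] by simp
    qed
  qed
  have "summable r"
    by (rule summableI_nonneg_bounded[where x="V 0 - (real N * l 1 xe ue + c)"])
       (use r_nn sumle Vlow in \<open>smt (verit)\<close>)+
  then have r0: "r \<longlonglongrightarrow> 0" by (rule summable_LIMSEQ_zero)
  have ax: "\<And>k. \<alpha> (norm (x k - xe)) \<le> r k"
  proof -
    fix k
    have "\<alpha> (norm (x k - xe)) \<le> \<alpha> (norm (x k - xe) + norm (ustar k ! 0 - ue))"
      by (rule Kmono) auto
    also have "\<dots> \<le> r k" unfolding r_def using rot_ge xX uU N_ge by simp
    finally show "\<alpha> (norm (x k - xe)) \<le> r k" .
  qed
  have "x \<longlonglongrightarrow> xe"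
  proof (rule LIMSEQ_I)
    fix e :: real assume e: "0 < e"
    have "0 < \<alpha> e" using Kstrict e by blast
    then obtain K where K: "\<forall>k\<ge>K. norm (r k - 0) < \<alpha> e" using r0 LIMSEQ_D by blast
    show "\<exists>K. \<forall>k\<ge>K. norm (x k - xe) < e"
    proof (intro exI allI impI)
      fix k assume "K \<le> k"
      then have rk: "r k < \<alpha> e" using K r_nn by auto
      show "norm (x k - xe) < e"
      proof (rule ccontr)
        assume "\<not> norm (x k - xe) < e"
        then have "\<alpha> e \<le> \<alpha> (norm (x k - xe))" using e by (intro Kmono) auto
        then show False using ax[of k] rk by linarith
      qed
    qed
  qed
  then show ?thesis using r0 unfolding r_def by simp
qed

end
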